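(* Let $n\ge 2$ and let $\mathbf{A}$ be an $n$-dimensional cyclic Leibniz algebra over $\mathbb{C}$. Then $\mathbf{A}$ is isomorphic to one of the following Leibniz algebras $\mathbf{L}$, each having basis $\{a,a^2,\ldots,a^n\}$ with $a\,a^i=a^{i+1}$ for $1\le i<n$, $a^i v=0$ for all $i\ge2$ and all $v$, and $aa^n$ given by: (1) $aa^n=0$ (nilpotent case); (2) $aa^n=a^n$; (3) $aa^n=a^k+\alpha_{k+1}a^{k+1}+\cdots+\alpha_na^n$, for some $2\le k\le n-1$ and some $(\alpha_{k+1},\ldots,\alpha_n)\in\mathbb{C}^{n-k}$. Moreover the choice is unique in the following sense: algebras from different cases among (1), (2), (3) are non-isomorphic, and two algebras from case (3), with data $(k,(\alpha_{k+1},\ldots,\alpha_n))$ and $(k',(\alpha'_{k'+1},\ldots,\alpha'_n))$, are isomorphic if and only if $k=k'$ and $(\alpha_{k+1},\ldots,\alpha_n)\sim(\alpha'_{k+1},\ldots,\alpha'_n)$; that is, the isomorphism classes in case (3) with a given $k$ correspond to the elements of $\mathbb{C}^{n-k}/\sim$.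
   Context: A (left) Leibniz algebra is a vector space with a bilinear product such that $x(yz)=(xy)z+y(xz)$ for all $x,y,z$. A cyclic Leibniz algebra is a Leibniz algebra generated by a single element. For an element $x$ set $x^1=x$ and $x^{j+1}=x\,x^j$. For $d\ge1$, the equivalence relation $\sim$ on $\mathbb{C}^d$ is defined by $(\gamma_1,\ldots,\gamma_d)\sim(\gamma'_1,\ldots,\gamma'_d)$ iff $(\gamma_1,\gamma_2,\ldots,\gamma_d)=(\omega^d\gamma'_1,\omega^{d-1}\gamma'_2,\ldots,\omega\gamma'_d)$ for some $(d+1)$-th root of unity $\omega$. *)

theory Defs
  imports Main "HOL.Complex"
begin

definition leibniz_algebra ::
  "(complex \<Rightarrow> 'a::ab_group_add \<Rightarrow> 'a) \<Rightarrow> ('a \<Rightarrow> 'a \<Rightarrow> 'a) \<Rightarrow> bool" where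
  "leibniz_algebra scale mult \<longleftrightarrow>
     vector_space scale \<and>
     (\<forall>x y z. mult (x + y) z = mult x z + mult y z) \<and>
     (\<forall>x y z. mult x (y + z) = mult x y + mult x z) \<and>
     (\<forall>c x y. mult (scale c x) y = scale c (mult x y)) \<and>
     (\<forall>c x y. mult x (scale c y) = scale c (mult x y)) \<and>
     (\<forall>x y z. mult x (mult y z) = mult (mult x y) z + mult y (mult x z))"

definition subalg_gen ::
  "(complex \<Rightarrow> 'a::ab_group_add \<Rightarrow> 'a) \<Rightarrow> ('a \<Rightarrow> 'a \<Rightarrow> 'a) \<Rightarrow> 'a set \<Rightarrow> 'a set" where
  "subalg_gen scale mult S = \<Inter>{B. S \<subseteq> B \<and> 0 \<in> B \<and>
      (\<forall>x\<in>B. \<forall>y\<in>B. x + y \<in> B \<and> mult x y \<in> B) \<and> (\<forall>c. \<forall>x\<in>B. scale c x \<in> B)}"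

definition cyclic_alg ::
  "(complex \<Rightarrow> 'a::ab_group_add \<Rightarrow> 'a) \<Rightarrow> ('a \<Rightarrow> 'a \<Rightarrow> 'a) \<Rightarrow> bool" where
  "cyclic_alg scale mult \<longleftrightarrow> (\<exists>x. subalg_gen scale mult {x} = UNIV)"

text \<open>Vectors are coordinate functions v :: nat \<Rightarrow> complex, where v i is
  the coefficient of the basis vector a^i (1 \<le> i \<le> n), zero outside {1..n}.
  The vector c gives a a^n. Products: a a^i = a^(i+1) for i < n, a a^n = c,
  a^i v = 0 for i \<ge> 2.\<close>

definition cvec :: "nat \<Rightarrow> (nat \<Rightarrow> complex) set" where
  "cvec n = {v. \<forall>k. (k < 1 \<or> n < k) \<longrightarrow> v k = 0}"

definition cyc_mult :: "nat \<Rightarrow> (nat \<Rightarrow> complex) \<Rightarrow> (nat \<Rightarrow> complex) \<Rightarrow> (nat \<Rightarrow> complex) \<Rightarrow> (nat \<Rightarrow> complex)" where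
  "cyc_mult n c u v = (\<lambda>k. u 1 * ((if 2 \<le> k \<and> k \<le> n then v (k - 1) else 0) + v n * c k))"

definition c_nil :: "nat \<Rightarrow> nat \<Rightarrow> complex" where
  "c_nil n = (\<lambda>j. 0)"

definition c_id :: "nat \<Rightarrow> nat \<Rightarrow> complex" where
  "c_id n = (\<lambda>j. if j = n then 1 else 0)"

definition c_k :: "nat \<Rightarrow> nat \<Rightarrow> (nat \<Rightarrow> complex) \<Rightarrow> nat \<Rightarrow> complex" where
  "c_k n k \<alpha> = (\<lambda>j. if j = k then 1 else if k < j \<and> j \<le> n then \<alpha> j else 0)"

definition iso_to_model ::
  "(complex \<Rightarrow> 'a::ab_group_add \<Rightarrow> 'a) \<Rightarrow> ('a \<Rightarrow> 'a \<Rightarrow> 'a) \<Rightarrow> nat \<Rightarrow> (nat \<Rightarrow> complex)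
     \<Rightarrow> ('a \<Rightarrow> nat \<Rightarrow> complex) \<Rightarrow> bool" where
  "iso_to_model scale mult n c f \<longleftrightarrow>
     bij_betw f UNIV (cvec n) \<and>
     (\<forall>x y. f (x + y) = (\<lambda>k. f x k + f y k)) \<and>
     (\<forall>a x. f (scale a x) = (\<lambda>k. a * f x k)) \<and>
     (\<forall>x y. f (mult x y) = cyc_mult n c (f x) (f y))"

definition models_iso :: "nat \<Rightarrow> (nat \<Rightarrow> complex) \<Rightarrow> (nat \<Rightarrow> complex) \<Rightarrow> bool" where
  "models_iso n c c' \<longleftrightarrow> (\<exists>g. bij_betw g (cvec n) (cvec n) \<and>
     (\<forall>x\<in>cvec n. \<forall>y\<in>cvec n. g (\<lambda>k. x k + y k) = (\<lambda>k. g x k + g y k)) \<and>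
     (\<forall>a. \<forall>x\<in>cvec n. g (\<lambda>k. a * x k) = (\<lambda>k. a * g x k)) \<and>
     (\<forall>x\<in>cvec n. \<forall>y\<in>cvec n. g (cyc_mult n c x y) = cyc_mult n c' (g x) (g y)))"

definition tuple_sim :: "nat \<Rightarrow> (nat \<Rightarrow> complex) \<Rightarrow> (nat \<Rightarrow> complex) \<Rightarrow> bool" where
  "tuple_sim d \<gamma> \<gamma>' \<longleftrightarrow> (\<exists>\<omega>::complex. \<omega> ^ (d + 1) = 1 \<and>
     (\<forall>i\<in>{1..d}. \<gamma> i = \<omega> ^ (d + 1 - i) * \<gamma>' i))"

end

theory Submission
  imports Defs
begin


definition ev :: "nat \<Rightarrow> nat \<Rightarrow> complex" where
  "ev i = (\<lambda>k. if k = i then 1 else 0)"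

definition lin :: "((nat \<Rightarrow> complex) \<Rightarrow> (nat \<Rightarrow> complex)) \<Rightarrow> bool" where
  "lin F \<longleftrightarrow> (\<forall>a b x y. F (\<lambda>k. a * x k + b * y k) = (\<lambda>k. a * F x k + b * F y k))"

lemma lin_zero: "lin F \<Longrightarrow> F (\<lambda>k. 0) = (\<lambda>k. 0)"
  unfolding lin_def by (erule allE[of _ 0], erule allE[of _ 0]) auto

lemma lin_sum:
  assumes "lin F" "finite I"
  shows "F (\<lambda>k. \<Sum>i\<in>I. a i * w i k) = (\<lambda>k. \<Sum>i\<in>I. a i * F (w i) k)"
  using assms(2)
proof (induction I rule: finite_induct)
  case empty
  then show ?case using lin_zero[OF assms(1)] by simp
next
  case (insert i I)
  have "F (\<lambda>k. \<Sum>i\<in>insert i I. a i * w i k) = F (\<lambda>k. a i * w i k + 1 * (\<Sum>i\<in>I. a i * w i k))"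
    using insert by simp
  also have "\<dots> = (\<lambda>k. a i * F (w i) k + 1 * F (\<lambda>k. \<Sum>i\<in>I. a i * w i k) k)"
    using assms(1) unfolding lin_def by (rule allE[of _ "a i"], elim allE[of _ 1] allE[of _ "w i"] allE[of _ "\<lambda>k. \<Sum>i\<in>I. a i * w i k"])
  finally show ?case using insert by simp
qed

lemma lin_comp: "lin F \<Longrightarrow> lin G \<Longrightarrow> lin (F \<circ> G)"
  unfolding lin_def by simp

lemma lin_pow: "lin F \<Longrightarrow> lin (F ^^ m)"
proof (induction m)
  case 0 then show ?case by (simp add: lin_def)
next
  case (Suc m) then show ?case using lin_comp[of F "F^^m"] by (simp add: comp_def)
qed

lemma funpow_comm: "(F ^^ a) ((F ^^ b) y) = (F ^^ b) ((F ^^ a) y)"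
  by (metis add.commute comp_apply funpow_add)

lemma cvec_sum: "(\<And>i. i \<in> I \<Longrightarrow> w i \<in> cvec n) \<Longrightarrow> (\<lambda>k. \<Sum>i\<in>I. a i * w i k) \<in> cvec n"
  unfolding cvec_def by auto

lemma ev_cvec: "1 \<le> i \<Longrightarrow> i \<le> n \<Longrightarrow> ev i \<in> cvec n"
  unfolding cvec_def ev_def by auto

lemma cvec_expand: "u \<in> cvec n \<Longrightarrow> u = (\<lambda>k. \<Sum>j<n. u (Suc j) * ev (Suc j) k)"
proof
  fix k assume u: "u \<in> cvec n"
  show "u k = (\<Sum>j<n. u (Suc j) * ev (Suc j) k)"
  proof (cases "1 \<le> k \<and> k \<le> n")
    case True
    then obtain j where j: "k = Suc j" "j < n" by (cases k) auto
    have "(\<Sum>j'<n. u (Suc j') * ev (Suc j') k) = (\<Sum>j'\<in>{j}. u (Suc j') * ev (Suc j') k)"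
      by (rule sum.mono_neutral_right) (use j in \<open>auto simp: ev_def\<close>)
    then show ?thesis using j by (simp add: ev_def)
  next
    case False
    then have "u k = 0" using u unfolding cvec_def by (cases "k = 0") auto
    moreover have "(\<Sum>j<n. u (Suc j) * ev (Suc j) k) = 0"
      using False by (intro sum.neutral) (auto simp: ev_def)
    ultimately show ?thesis by simp
  qed
qed

lemma sum_ev: "(\<Sum>j<n. a j * ev (Suc j) k) = (if 1 \<le> k \<and> k \<le> n then a (k - 1) else 0)"
proof (cases "1 \<le> k \<and> k \<le> n")
  case True
  then obtain i where i: "k = Suc i" "i < n" by (cases k) auto
  have "(\<Sum>j<n. a j * ev (Suc j) k) = (\<Sum>j\<in>{i}. a j * ev (Suc j) k)"
    by (rule sum.mono_neutral_right) (use i in \<open>auto simp: ev_def\<close>)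
  then show ?thesis using i by (simp add: ev_def)
next
  case False
  then show ?thesis by (intro trans[OF sum.neutral]) (auto simp: ev_def)
qed



lemma models_iso_nec:
  assumes n2: "2 \<le> n" and cc: "c \<in> cvec n" and cc': "c' \<in> cvec n" and iso: "models_iso n c c'"
  shows "\<exists>t. t \<noteq> 0 \<and> (\<forall>j. c j = t ^ (n + 1 - j) * c' j)"
proof -
  obtain g where bij: "bij_betw g (cvec n) (cvec n)"
    and gadd: "\<And>x y. x \<in> cvec n \<Longrightarrow> y \<in> cvec n \<Longrightarrow> g (\<lambda>k. x k + y k) = (\<lambda>k. g x k + g y k)"
    and gsc: "\<And>a x. x \<in> cvec n \<Longrightarrow> g (\<lambda>k. a * x k) = (\<lambda>k. a * g x k)"
    and gmul: "\<And>x y. x \<in> cvec n \<Longrightarrow> y \<in> cvec n \<Longrightarrow> g (cyc_mult n c x y) = cyc_mult n c' (g x) (g y)"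
    using iso unfolding models_iso_def by blast
  have gin: "\<And>x. x \<in> cvec n \<Longrightarrow> g x \<in> cvec n" using bij by (simp add: bij_betw_apply)
  have ginj: "inj_on g (cvec n)" using bij by (simp add: bij_betw_def)
  have gsurj: "\<And>y. y \<in> cvec n \<Longrightarrow> \<exists>x\<in>cvec n. g x = y" using bij
    by (metis bij_betw_def imageE)
  have z: "(\<lambda>k. 0::complex) \<in> cvec n" by (simp add: cvec_def)
  have g0: "g (\<lambda>k. 0) = (\<lambda>k. 0)" using gsc[OF z, of 0] by simp
  have sc_in: "\<And>a x. x \<in> cvec n \<Longrightarrow> (\<lambda>k. a * x k) \<in> cvec n" by (simp add: cvec_def)
  have glin: "\<And>a b x y. x \<in> cvec n \<Longrightarrow> y \<in> cvec n \<Longrightarrow>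
      g (\<lambda>k. a * x k + b * y k) = (\<lambda>k. a * g x k + b * g y k)"
  proof -
    fix a b x y assume x: "x \<in> cvec n" and y: "y \<in> cvec n"
    have "g (\<lambda>k. a * x k + b * y k) = (\<lambda>k. g (\<lambda>k. a * x k) k + g (\<lambda>k. b * y k) k)"
      using gadd[OF sc_in[OF x] sc_in[OF y]] by simp
    then show "g (\<lambda>k. a * x k + b * y k) = (\<lambda>k. a * g x k + b * g y k)"
      using gsc[OF x] gsc[OF y] by simp
  qed
  have gsum: "g (\<lambda>k. \<Sum>i\<in>I. a i * w i k) = (\<lambda>k. \<Sum>i\<in>I. a i * g (w i) k)"
    if "finite I" "\<And>i. i \<in> I \<Longrightarrow> w i \<in> cvec n" for I a w
    using that
  proof (induction I rule: finite_induct)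
    case empty then show ?case using g0 by simp
  next
    case (insert i I)
    have "g (\<lambda>k. \<Sum>i\<in>insert i I. a i * w i k) = g (\<lambda>k. a i * w i k + 1 * (\<Sum>i\<in>I. a i * w i k))"
      using insert by simp
    also have "\<dots> = (\<lambda>k. a i * g (w i) k + 1 * g (\<lambda>k. \<Sum>i\<in>I. a i * w i k) k)"
      using glin[of "w i" "\<lambda>k. \<Sum>i\<in>I. a i * w i k" "a i" 1] insert.prems cvec_sum[of I w n a]
      by simp
    finally show ?case using insert by simp
  qed
  define u where "u = g (ev 1)"
  define t where "t = u 1"
  have e1: "ev 1 \<in> cvec n" using n2 by (simp add: ev_cvec)
  have uin: "u \<in> cvec n" using gin[OF e1] u_def by simp
  obtain y0 where y0: "y0 \<in> cvec n" "g y0 = ev 1" using gsurj[OF e1] by blast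
  have A0: "g x 1 = 0" if x: "x \<in> cvec n" "x 1 = 0" for x
  proof -
    have "cyc_mult n c x y0 = (\<lambda>k. 0)" using x by (simp add: cyc_mult_def)
    then have "(\<lambda>k. 0) = cyc_mult n c' (g x) (g y0)" using gmul[OF x(1) y0(1)] g0 by simp
    then have "cyc_mult n c' (g x) (ev 1) = (\<lambda>k. 0)" using y0 by simp
    then have "cyc_mult n c' (g x) (ev 1) 2 = 0" by simp
    then show ?thesis using n2 by (simp add: cyc_mult_def ev_def)
  qed
  have A: "g x 1 = x 1 * t" if x: "x \<in> cvec n" for x
  proof -
    define x' where "x' = (\<lambda>k. x k - x 1 * ev 1 k)"
    have x'in: "x' \<in> cvec n" using x e1 unfolding x'_def cvec_def by auto
    have x'1: "x' 1 = 0" by (simp add: x'_def ev_def)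
    have "x = (\<lambda>k. x 1 * ev 1 k + 1 * x' k)" by (simp add: x'_def)
    then have "g x = (\<lambda>k. x 1 * g (ev 1) k + 1 * g x' k)" using glin[OF e1 x'in] by metis
    then show ?thesis using A0[OF x'in x'1] by (simp add: t_def u_def)
  qed
  have t0: "t \<noteq> 0" using A[OF y0(1)] y0(2) by (auto simp: ev_def)
  define M where "M = (\<lambda>y::nat\<Rightarrow>complex. \<lambda>k. t * ((if 2 \<le> k \<and> k \<le> n then y (k - 1) else 0) + y n * c' k))"
  have linM: "lin M" unfolding lin_def M_def by (auto simp: algebra_simps)
  have B: "g (cyc_mult n c (ev 1) y) = M (g y)" if y: "y \<in> cvec n" for y
    using gmul[OF e1 y] by (simp add: cyc_mult_def M_def t_def u_def)
  have shift: "ev (Suc (Suc j)) = cyc_mult n c (ev 1) (ev (Suc j))" if "Suc j < n" for j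
    using that by (auto simp: cyc_mult_def ev_def intro!: ext)
  have C: "g (ev (Suc j)) = (M ^^ j) u" if "j < n" for j
    using that
  proof (induction j)
    case 0 then show ?case by (simp add: u_def)
  next
    case (Suc j)
    have "g (ev (Suc (Suc j))) = M (g (ev (Suc j)))"
      using shift[OF Suc.prems] B[OF ev_cvec[of "Suc j" n]] Suc.prems by simp
    then show ?case using Suc by simp
  qed
  have cshift: "c = cyc_mult n c (ev 1) (ev n)"
    using cc n2 unfolding cyc_mult_def ev_def cvec_def by (auto intro!: ext)
  have gc: "g c = (M ^^ n) u"
  proof -
    obtain m where m: "n = Suc m" using n2 by (cases n) auto
    have "g c = M (g (ev n))" using cshift B[OF ev_cvec[of n n]] n2 by simp
    also have "\<dots> = M ((M ^^ m) u)" using C[of m] m by simp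
    finally show ?thesis using m by simp
  qed
  have D: "(M ^^ j) (ev 1) = (\<lambda>k. t ^ j * ev (Suc j) k)" if "j < n" for j
    using that
  proof (induction j)
    case 0 then show ?case by simp
  next
    case (Suc j)
    then have "(M ^^ Suc j) (ev 1) = M (\<lambda>k. t ^ j * ev (Suc j) k)" by simp
    then show ?case using Suc.prems by (auto simp: M_def ev_def intro!: ext)
  qed
  have MnE: "(M ^^ n) (ev 1) = (\<lambda>k. t ^ n * c' k)"
  proof -
    obtain m where m: "n = Suc m" using n2 by (cases n) auto
    have "(M ^^ n) (ev 1) = M ((M ^^ m) (ev 1))" using m by simp
    also have "\<dots> = M (\<lambda>k. t ^ m * ev n k)" using D[of m] m by simp
    also have "\<dots> = (\<lambda>k. t ^ n * c' k)" using m by (auto simp: M_def ev_def intro!: ext)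
    finally show ?thesis .
  qed
  define b where "b j = (if j = n then 1 else - (c' (Suc j) * t ^ (n - j)))" for j
  define P where "P y = (\<lambda>k. \<Sum>j\<in>{..n}. b j * (M ^^ j) y k)" for y
  have Pe: "P (ev 1) = (\<lambda>k. 0)"
  proof
    fix k
    have "P (ev 1) k = (M ^^ n) (ev 1) k + (\<Sum>j<n. b j * (M ^^ j) (ev 1) k)"
      by (simp add: P_def lessThan_Suc_atMost[symmetric] b_def)
    also have "(\<Sum>j<n. b j * (M ^^ j) (ev 1) k) = (\<Sum>j<n. (- (t^n * c' (Suc j))) * ev (Suc j) k)"
    proof (rule sum.cong)
      fix j assume "j \<in> {..<n}"
      then have j: "j < n" by simp
      have tt: "t ^ (n - j) * t ^ j = t ^ n" using j by (simp add: power_add[symmetric])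
      show "b j * (M ^^ j) (ev 1) k = (- (t^n * c' (Suc j))) * ev (Suc j) k"
        using j D[OF j] tt by (simp add: b_def algebra_simps)
    qed simp
    also have "\<dots> = - (t ^ n * c' k)"
      using cc' unfolding sum_ev cvec_def by (cases k) auto
    finally show "P (ev 1) k = 0" using MnE by simp
  qed
  have Psum: "P (\<lambda>k. \<Sum>i\<in>I. a i * w i k) = (\<lambda>k. \<Sum>i\<in>I. a i * P (w i) k)" if "finite I" for I a w
  proof
    fix k
    have "P (\<lambda>k. \<Sum>i\<in>I. a i * w i k) k = (\<Sum>j\<in>{..n}. b j * (\<Sum>i\<in>I. a i * (M ^^ j) (w i) k))"
      unfolding P_def lin_sum[OF lin_pow[OF linM] that] by simp
    also have "\<dots> = (\<Sum>i\<in>I. a i * P (w i) k)"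
      unfolding P_def sum_distrib_left by (subst sum.swap) (simp add: algebra_simps)
    finally show "P (\<lambda>k. \<Sum>i\<in>I. a i * w i k) k = (\<Sum>i\<in>I. a i * P (w i) k)" .
  qed
  have Pcomm: "P ((M ^^ i) y) = (M ^^ i) (P y)" for i y
    unfolding P_def lin_sum[OF lin_pow[OF linM] finite_atMost] using funpow_comm[where F=M] by simp
  have PMe: "P ((M ^^ j) (ev 1)) = (\<lambda>k. 0)" for j
    using Pcomm Pe lin_zero[OF lin_pow[OF linM]] by simp
  have uexp: "u = (\<lambda>k. \<Sum>j<n. (u (Suc j) / t ^ j) * (M ^^ j) (ev 1) k)"
  proof -
    have "u = (\<lambda>k. \<Sum>j<n. u (Suc j) * ev (Suc j) k)" using cvec_expand[OF uin] .
    also have "\<dots> = (\<lambda>k. \<Sum>j<n. (u (Suc j) / t ^ j) * (M ^^ j) (ev 1) k)"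
    proof (intro ext sum.cong refl)
      fix k j assume "j \<in> {..<n}"
      then show "u (Suc j) * ev (Suc j) k = (u (Suc j) / t ^ j) * (M ^^ j) (ev 1) k"
        using D[of j] t0 by simp
    qed
    finally show ?thesis .
  qed
  have Pu: "P u = (\<lambda>k. 0)"
  proof -
    have PMe': "P ((M ^^ j) (ev (Suc 0))) = (\<lambda>k. 0)" for j using PMe[of j] by simp
    show ?thesis by (subst uexp, subst Psum) (auto simp: PMe')
  qed
  define dd where "dd = (\<lambda>k. \<Sum>j<n. (c' (Suc j) * t ^ (n - j)) * ev (Suc j) k)"
  have ddin: "dd \<in> cvec n" unfolding dd_def by (rule cvec_sum) (auto intro: ev_cvec)
  have "g dd = (\<lambda>k. \<Sum>j<n. (c' (Suc j) * t ^ (n - j)) * g (ev (Suc j)) k)"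
    unfolding dd_def by (rule gsum) (auto intro: ev_cvec)
  also have "\<dots> = (\<lambda>k. \<Sum>j<n. (c' (Suc j) * t ^ (n - j)) * (M ^^ j) u k)"
    by (intro ext sum.cong) (auto simp: C)
  also have "\<dots> = (M ^^ n) u"
  proof
    fix k
    have "P u k = 0" using Pu by simp
    then have "(M ^^ n) u k + (\<Sum>j<n. b j * (M ^^ j) u k) = 0"
      by (simp add: P_def lessThan_Suc_atMost[symmetric] b_def add.commute)
    moreover have "(\<Sum>j<n. b j * (M ^^ j) u k) = - (\<Sum>j<n. (c' (Suc j) * t ^ (n - j)) * (M ^^ j) u k)"
      by (simp add: b_def sum_negf[symmetric])
    ultimately show "(\<Sum>j<n. (c' (Suc j) * t ^ (n - j)) * (M ^^ j) u k) = (M ^^ n) u k"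
      by (simp add: add_eq_0_iff)
  qed
  finally have "g dd = g c" using gc by simp
  then have cdd: "c = dd" using ginj ddin cc by (metis inj_onD)
  have "\<forall>j. c j = t ^ (n + 1 - j) * c' j"
  proof
    fix j
    show "c j = t ^ (n + 1 - j) * c' j"
      using cc' unfolding cdd dd_def sum_ev cvec_def
      by (cases j) (auto simp: Suc_diff_le)
  qed
  then show ?thesis using t0 by blast
qed



lemma complex_root_ex: assumes "c \<noteq> 0" "m > 0" shows "\<exists>z::complex. z ^ m = c"
proof -
  have "(1::complex) \<in> {z. z ^ m = 1}" by simp
  from bij_betw_apply[OF bij_betw_nth_root_unity[OF assms] this]
  show ?thesis by blast
qed

definition scal :: "complex \<Rightarrow> (nat \<Rightarrow> complex) \<Rightarrow> nat \<Rightarrow> complex" where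
  "scal t v = (\<lambda>k. t ^ k * v k)"

lemma scal_mult:
  assumes "\<forall>k. t ^ k * c k = t ^ (n + 1) * c' k"
  shows "scal t (cyc_mult n c u v) = cyc_mult n c' (scal t u) (scal t v)"
proof
  fix k
  have h: "t ^ k * c k = t ^ (n + 1) * c' k" using assms by blast
  show "scal t (cyc_mult n c u v) k = cyc_mult n c' (scal t u) (scal t v) k"
  proof (cases "2 \<le> k \<and> k \<le> n")
    case True
    then have e1: "t ^ k = t * t ^ (k - 1)" by (cases k) auto
    have e2: "t ^ k * c k = t * (t ^ n * c' k)" using h by simp
    have "scal t (cyc_mult n c u v) k = u 1 * (t ^ k * v (k - 1)) + u 1 * v n * (t ^ k * c k)"
      using True by (simp add: scal_def cyc_mult_def algebra_simps)
    also have "\<dots> = cyc_mult n c' (scal t u) (scal t v) k"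
      unfolding e2 using True by (subst e1) (simp add: scal_def cyc_mult_def algebra_simps)
    finally show ?thesis .
  next
    case False
    have e2: "t ^ k * c k = t * (t ^ n * c' k)" using h by simp
    have "scal t (cyc_mult n c u v) k = u 1 * v n * (t ^ k * c k)"
      unfolding scal_def cyc_mult_def if_not_P[OF False] by (simp add: algebra_simps)
    also have "\<dots> = cyc_mult n c' (scal t u) (scal t v) k"
      unfolding e2 scal_def cyc_mult_def if_not_P[OF False] by (simp add: algebra_simps)
    finally show ?thesis .
  qed
qed

lemma scal_bij: assumes t: "t \<noteq> 0" shows "bij_betw (scal t) (cvec n) (cvec n)"
proof (rule bij_betw_byWitness[where f' = "scal (1 / t)"])
  have p: "(1 / t) ^ k * (t ^ k * x) = x" for k x
  proof -
    have "(1 / t) ^ k * t ^ k = 1" using t by (simp add: power_mult_distrib[symmetric])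
    then show ?thesis by (metis mult.assoc mult_1)
  qed
  have q: "t ^ k * ((1 / t) ^ k * x) = x" for k x
  proof -
    have "t ^ k * (1 / t) ^ k = 1" using t by (simp add: power_mult_distrib[symmetric])
    then show ?thesis by (metis mult.assoc mult_1)
  qed
  show "\<forall>a\<in>cvec n. scal (1 / t) (scal t a) = a"
    unfolding scal_def p by simp
  show "\<forall>a'\<in>cvec n. scal t (scal (1 / t) a') = a'"
    unfolding scal_def q by simp
  show "scal t ` cvec n \<subseteq> cvec n" by (auto simp: scal_def cvec_def)
  show "scal (1 / t) ` cvec n \<subseteq> cvec n" by (auto simp: scal_def cvec_def)
qed

lemma models_iso_suff:
  assumes "t \<noteq> 0" "\<forall>k. t ^ k * c k = t ^ (n + 1) * c' k"
  shows "models_iso n c c'"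
  unfolding models_iso_def
proof (intro exI[of _ "scal t"] conjI ballI allI)
  show "bij_betw (scal t) (cvec n) (cvec n)" using scal_bij[OF assms(1)] .
  show "scal t (\<lambda>k. x k + y k) = (\<lambda>k. scal t x k + scal t y k)" for x y
    by (simp add: scal_def distrib_left)
  show "scal t (\<lambda>k. a * x k) = (\<lambda>k. a * scal t x k)" for a x
    by (simp add: scal_def mult.left_commute)
  show "scal t (cyc_mult n c x y) = cyc_mult n c' (scal t x) (scal t y)" for x y
    using scal_mult[OF assms(2)] .
qed

lemma iso_scale:
  assumes "iso_to_model scale mult n c f" "t \<noteq> 0" "\<forall>k. t ^ k * c k = t ^ (n + 1) * c' k"
  shows "iso_to_model scale mult n c' (\<lambda>x. scal t (f x))"
proof -
  have f: "bij_betw f UNIV (cvec n)" "\<And>x y. f (x + y) = (\<lambda>k. f x k + f y k)"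
     "\<And>a x. f (scale a x) = (\<lambda>k. a * f x k)" "\<And>x y. f (mult x y) = cyc_mult n c (f x) (f y)"
    using assms(1) unfolding iso_to_model_def by blast+
  have "bij_betw (scal t \<circ> f) UNIV (cvec n)"
    using bij_betw_trans[OF f(1) scal_bij[OF assms(2)]] .
  then have b: "bij_betw (\<lambda>x. scal t (f x)) UNIV (cvec n)" by (simp add: comp_def)
  show ?thesis unfolding iso_to_model_def
  proof (intro conjI allI b)
    show "scal t (f (x + y)) = (\<lambda>k. scal t (f x) k + scal t (f y) k)" for x y
      by (simp add: f scal_def distrib_left)
    show "scal t (f (scale a x)) = (\<lambda>k. a * scal t (f x) k)" for a x
      by (simp add: f scal_def mult.left_commute)
    show "scal t (f (mult x y)) = cyc_mult n c' (scal t (f x)) (scal t (f y))" for x y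
      using scal_mult[OF assms(3)] f(4) by simp
  qed
qed

lemma normalize:
  assumes n2: "2 \<le> n" and cc: "c \<in> cvec n" and c1: "c 1 = 0"
  shows "c = c_nil n \<or> (\<exists>t. t \<noteq> 0 \<and> (\<forall>k. t ^ k * c k = t ^ (n + 1) * c_id n k))
     \<or> (\<exists>k \<alpha> t. 2 \<le> k \<and> k \<le> n - 1 \<and> t \<noteq> 0 \<and> (\<forall>j. t ^ j * c j = t ^ (n + 1) * c_k n k \<alpha> j))"
proof (cases "\<forall>j. c j = 0")
  case True
  then have "c = c_nil n" unfolding c_nil_def by (intro ext) simp
  then show ?thesis by blast
next
  case False
  define k0 where "k0 = (LEAST j. c j \<noteq> 0)"
  obtain j0 where j0: "c j0 \<noteq> 0" using False by blast
  have ck0: "c k0 \<noteq> 0" unfolding k0_def by (rule LeastI[of "\<lambda>j. c j \<noteq> 0", OF j0])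
  have below: "\<And>j. j < k0 \<Longrightarrow> c j = 0" unfolding k0_def using not_less_Least by blast
  have c0: "c 0 = 0" using cc by (simp add: cvec_def)
  have "k0 \<noteq> 0" using ck0 c0 by metis
  have "k0 \<noteq> 1" using ck0 c1 by metis
  with \<open>k0 \<noteq> 0\<close> have k2: "2 \<le> k0" by arith
  have kn: "k0 \<le> n"
  proof (rule ccontr)
    assume "\<not> k0 \<le> n" then have "c k0 = 0" using cc by (simp add: cvec_def)
    then show False using ck0 by simp
  qed
  obtain t where t: "t ^ (n + 1 - k0) = c k0" using complex_root_ex[OF ck0, of "n + 1 - k0"] kn by auto
  have t0: "t \<noteq> 0"
  proof
    assume "t = 0"
    moreover have "n + 1 - k0 \<noteq> 0" using kn by arith
    ultimately have "c k0 = 0" using t by (simp add: zero_power)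
    then show False using ck0 by simp
  qed
  define c' where "c' j = c j * t ^ j / t ^ (n + 1)" for j
  have rel: "\<forall>j. t ^ j * c j = t ^ (n + 1) * c' j" using t0 by (simp add: c'_def)
  have pw: "t ^ (n + 1) = t ^ k0 * t ^ (n + 1 - k0)" using kn by (simp add: power_add[symmetric])
  have c'k0: "c' k0 = 1" unfolding c'_def pw t using t0 ck0 by simp
  have c'below: "\<And>j. j < k0 \<Longrightarrow> c' j = 0" using below by (simp add: c'_def)
  have c'above: "\<And>j. n < j \<Longrightarrow> c' j = 0" using cc by (simp add: c'_def cvec_def)
  show ?thesis
  proof (cases "k0 = n")
    case True
    have "c' = c_id n"
    proof
      fix j show "c' j = c_id n j"
        using True c'k0 c'below c'above by (cases j n rule: linorder_cases) (auto simp: c_id_def)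
    qed
    then have "\<forall>j. t ^ j * c j = t ^ (n + 1) * c_id n j" using rel by simp
    then show ?thesis using t0 by blast
  next
    case False
    have "c' = c_k n k0 c'"
    proof
      fix j show "c' j = c_k n k0 c' j"
        using c'k0 c'below c'above by (cases j k0 rule: linorder_cases) (auto simp: c_k_def)
    qed
    then have "\<forall>j. t ^ j * c j = t ^ (n + 1) * c_k n k0 c' j" using rel by (metis (no_types))
    moreover have "k0 \<le> n - 1" using kn False by arith
    ultimately show ?thesis using k2 t0 by blast
  qed
qed



lemma c_nil_cvec: "c_nil n \<in> cvec n" by (simp add: c_nil_def cvec_def)
lemma c_id_cvec: "1 \<le> n \<Longrightarrow> c_id n \<in> cvec n" by (simp add: c_id_def cvec_def)
lemma c_k_cvec: "2 \<le> k \<Longrightarrow> k \<le> n \<Longrightarrow> c_k n k \<alpha> \<in> cvec n" by (simp add: c_k_def cvec_def)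

lemma uniq_nil_id: "2 \<le> n \<Longrightarrow> \<not> models_iso n (c_nil n) (c_id n)"
proof
  assume n2: "2 \<le> n" and m: "models_iso n (c_nil n) (c_id n)"
  obtain t where t: "t \<noteq> 0" "\<forall>j. c_nil n j = t ^ (n + 1 - j) * c_id n j"
    using models_iso_nec[OF n2 c_nil_cvec c_id_cvec m] n2 by auto
  from t(2) have "c_nil n n = t ^ (n + 1 - n) * c_id n n" by blast
  then show False using t(1) by (simp add: c_nil_def c_id_def)
qed

lemma uniq_nil_k: "2 \<le> n \<Longrightarrow> 2 \<le> k \<Longrightarrow> k \<le> n - 1 \<Longrightarrow> \<not> models_iso n (c_nil n) (c_k n k \<alpha>)"
proof
  assume n2: "2 \<le> n" and k: "2 \<le> k" "k \<le> n - 1" and m: "models_iso n (c_nil n) (c_k n k \<alpha>)"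
  obtain t where t: "t \<noteq> 0" "\<forall>j. c_nil n j = t ^ (n + 1 - j) * c_k n k \<alpha> j"
    using models_iso_nec[OF n2 c_nil_cvec c_k_cvec[OF k(1)] m] k by (metis One_nat_def diff_le_self le_trans)
  from t(2) have "c_nil n k = t ^ (n + 1 - k) * c_k n k \<alpha> k" by blast
  then show False using t(1) by (simp add: c_nil_def c_k_def)
qed

lemma uniq_id_k: "2 \<le> n \<Longrightarrow> 2 \<le> k \<Longrightarrow> k \<le> n - 1 \<Longrightarrow> \<not> models_iso n (c_id n) (c_k n k \<alpha>)"
proof
  assume n2: "2 \<le> n" and k: "2 \<le> k" "k \<le> n - 1" and m: "models_iso n (c_id n) (c_k n k \<alpha>)"
  obtain t where t: "t \<noteq> 0" "\<forall>j. c_id n j = t ^ (n + 1 - j) * c_k n k \<alpha> j"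
    using models_iso_nec[OF n2 c_id_cvec c_k_cvec[OF k(1)] m] k n2 by (metis One_nat_def diff_le_self le_trans one_le_numeral)
  from t(2) have "c_id n k = t ^ (n + 1 - k) * c_k n k \<alpha> k" by blast
  moreover have "k \<noteq> n" using k n2 by arith
  ultimately show False using t(1) by (simp add: c_id_def c_k_def)
qed

lemma uniq_k_k:
  assumes n2: "2 \<le> n" and k: "2 \<le> k" "k \<le> n - 1" and k': "2 \<le> k'" "k' \<le> n - 1"
  shows "models_iso n (c_k n k \<alpha>) (c_k n k' \<alpha>') \<longleftrightarrow>
             k = k' \<and> tuple_sim (n - k) (\<lambda>i. \<alpha> (k + i)) (\<lambda>i. \<alpha>' (k + i))"
proof
  assume m: "models_iso n (c_k n k \<alpha>) (c_k n k' \<alpha>')"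
  obtain t where t: "t \<noteq> 0" "\<forall>j. c_k n k \<alpha> j = t ^ (n + 1 - j) * c_k n k' \<alpha>' j"
    using models_iso_nec[OF n2 c_k_cvec[OF k(1)] c_k_cvec[OF k'(1)] m] k k' by (metis One_nat_def diff_le_self le_trans)
  have kk: "k = k'"
  proof (rule ccontr)
    assume "k \<noteq> k'"
    then consider "k < k'" | "k' < k" by arith
    then show False
    proof cases
      case 1
      from t(2) have "c_k n k \<alpha> k = t ^ (n + 1 - k) * c_k n k' \<alpha>' k" by blast
      then show False using 1 by (simp add: c_k_def)
    next
      case 2
      from t(2) have "c_k n k \<alpha> k' = t ^ (n + 1 - k') * c_k n k' \<alpha>' k'" by blast
      then show False using 2 t(1) by (simp add: c_k_def)
    qed
  qed
  have tk: "t ^ (n - k + 1) = 1"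
  proof -
    from t(2) have "c_k n k \<alpha> k = t ^ (n + 1 - k) * c_k n k' \<alpha>' k" by blast
    moreover have "n + 1 - k = n - k + 1" using k by arith
    ultimately show ?thesis using kk by (simp add: c_k_def)
  qed
  have "\<forall>i\<in>{1..n - k}. \<alpha> (k + i) = t ^ (n - k + 1 - i) * \<alpha>' (k + i)"
  proof
    fix i assume i: "i \<in> {1..n - k}"
    from t(2) have "c_k n k \<alpha> (k + i) = t ^ (n + 1 - (k + i)) * c_k n k' \<alpha>' (k + i)" by blast
    moreover have "n + 1 - (k + i) = n - k + 1 - i" using i k by auto
    moreover have "k + i \<le> n" using i k by auto
    ultimately show "\<alpha> (k + i) = t ^ (n - k + 1 - i) * \<alpha>' (k + i)"
      using kk i by (simp add: c_k_def)
  qed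
  then show "k = k' \<and> tuple_sim (n - k) (\<lambda>i. \<alpha> (k + i)) (\<lambda>i. \<alpha>' (k + i))"
    using kk tk unfolding tuple_sim_def by blast
next
  assume "k = k' \<and> tuple_sim (n - k) (\<lambda>i. \<alpha> (k + i)) (\<lambda>i. \<alpha>' (k + i))"
  then obtain \<omega> where kk: "k = k'" and w: "\<omega> ^ (n - k + 1) = 1"
    and wa: "\<forall>i\<in>{1..n - k}. \<alpha> (k + i) = \<omega> ^ (n - k + 1 - i) * \<alpha>' (k + i)"
    unfolding tuple_sim_def by blast
  have w0: "\<omega> \<noteq> 0" using w by (metis power_0_left zero_neq_one add_eq_0_iff_both_eq_0 one_neq_zero)
  have "\<forall>j. \<omega> ^ j * c_k n k \<alpha> j = \<omega> ^ (n + 1) * c_k n k \<alpha>' j"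
  proof
    fix j
    have pw: "\<omega> ^ (n + 1) = \<omega> ^ k * \<omega> ^ (n - k + 1)" using k by (simp add: power_add[symmetric])
    show "\<omega> ^ j * c_k n k \<alpha> j = \<omega> ^ (n + 1) * c_k n k \<alpha>' j"
    proof (cases "j = k")
      case True
      have "\<omega> ^ (n + 1) = \<omega> ^ k" unfolding pw w by simp
      then show ?thesis using True by (simp add: c_k_def)
    next
      case False
      show ?thesis
      proof (cases "k < j \<and> j \<le> n")
        case True
        define i where "i = j - k"
        have i: "i \<in> {1..n - k}" "j = k + i" using True by (auto simp: i_def)
        have "\<alpha> j = \<omega> ^ (n - k + 1 - i) * \<alpha>' j" using wa i by auto
        moreover have "\<omega> ^ j * \<omega> ^ (n - k + 1 - i) = \<omega> ^ (n + 1)"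
        proof -
          have "j + (n - k + 1 - i) = n + 1" using i k by auto
          then show ?thesis by (metis power_add)
        qed
        ultimately show ?thesis using True False by (simp add: c_k_def mult.assoc[symmetric])
      next
        case F2: False
        then show ?thesis using False unfolding c_k_def by auto
      qed
    qed
  qed
  then show "models_iso n (c_k n k \<alpha>) (c_k n k' \<alpha>')" using models_iso_suff[OF w0] kk by blast
qed



lemma existence:
  fixes scale :: "complex \<Rightarrow> 'a::ab_group_add \<Rightarrow> 'a" and mult :: "'a \<Rightarrow> 'a \<Rightarrow> 'a"
  assumes n2: "2 \<le> n" and L: "leibniz_algebra scale mult"
    and D: "vector_space.dim scale (UNIV :: 'a set) = n" and C: "cyclic_alg scale mult"
  shows "\<exists>c f. c \<in> cvec n \<and> c 1 = 0 \<and> iso_to_model scale mult n c f"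
proof -
  interpret V: vector_space scale using L unfolding leibniz_algebra_def by blast
  have madd1: "\<And>x y z. mult (x + y) z = mult x z + mult y z"
    and madd2: "\<And>x y z. mult x (y + z) = mult x y + mult x z"
    and msc1: "\<And>c x y. mult (scale c x) y = scale c (mult x y)"
    and msc2: "\<And>c x y. mult x (scale c y) = scale c (mult x y)"
    and leib: "\<And>x y z. mult x (mult y z) = mult (mult x y) z + mult y (mult x z)"
    using L unfolding leibniz_algebra_def by blast+
  have m0r: "mult y 0 = 0" for y using madd2[of y 0 0] by simp
  have m0l: "mult 0 z = 0" for z using madd1[of 0 0 z] by simp
  have msum1: "mult (sum g I) z = (\<Sum>i\<in>I. mult (g i) z)" for g :: "nat \<Rightarrow> 'a" and I z
    by (induction I rule: infinite_finite_induct) (auto simp: m0l madd1)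
  have msum2: "mult y (sum g I) = (\<Sum>i\<in>I. mult y (g i))" for g :: "nat \<Rightarrow> 'a" and I y
    by (induction I rule: infinite_finite_induct) (auto simp: m0r madd2)
  obtain x where gen: "subalg_gen scale mult {x} = UNIV" using C unfolding cyclic_alg_def by blast
  define q where "q i = (mult x ^^ i) x" for i
  have q0: "q 0 = x" by (simp add: q_def)
  have qS: "q (Suc i) = mult x (q i)" for i by (simp add: q_def)
  have annih: "\<forall>z. mult (q (Suc i)) z = 0" for i
  proof (induction i)
    case 0
    show ?case
    proof
      fix z
      have "mult x (mult x z) = mult (mult x x) z + mult x (mult x z)" by (rule leib)
      then show "mult (q (Suc 0)) z = 0" by (simp add: qS q0)
    qed
  next
    case (Suc i)
    show ?case
    proof
      fix z
      have "mult x (mult (q (Suc i)) z) = mult (mult x (q (Suc i))) z + mult (q (Suc i)) (mult x z)"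
        by (rule leib)
      then show "mult (q (Suc (Suc i))) z = 0" using Suc by (simp add: qS m0r)
    qed
  qed
  have annih': "1 \<le> i \<Longrightarrow> mult (q i) z = 0" for i z
    using annih[of "i - 1"] by simp
  define S where "S = V.span (range q)"
  have mx: "mult x y \<in> S" if "y \<in> S" for y
    using that unfolding S_def
  proof (induction rule: V.span_induct_alt)
    case base then show ?case by (simp add: m0r V.span_zero)
  next
    case (step c w y)
    then obtain i where "w = q i" by blast
    then have "mult x (scale c w + y) = scale c (q (Suc i)) + mult x y" by (simp add: madd2 msc2 qS)
    then show ?case using step by (simp add: V.span_add V.span_scale V.span_base)
  qed
  have my: "mult y z \<in> S" if "y \<in> S" "z \<in> S" for y z
    using that(1) unfolding S_def
  proof (induction rule: V.span_induct_alt)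
    case base then show ?case by (simp add: m0l V.span_zero)
  next
    case (step c w y)
    then obtain i where i: "w = q i" by blast
    have "mult w z \<in> V.span (range q)"
    proof (cases i)
      case 0 then show ?thesis using mx[OF that(2)] i q0 S_def by simp
    next
      case (Suc j) then show ?thesis using annih[of j] i by (simp add: V.span_zero)
    qed
    then show ?case using step by (simp add: madd1 msc1 V.span_add V.span_scale)
  qed
  have SU: "S = UNIV"
  proof -
    have "S \<in> {B. {x} \<subseteq> B \<and> 0 \<in> B \<and> (\<forall>x\<in>B. \<forall>y\<in>B. x + y \<in> B \<and> mult x y \<in> B) \<and> (\<forall>c. \<forall>x\<in>B. scale c x \<in> B)}"
      using my unfolding S_def
      by (auto simp: V.span_zero V.span_add V.span_scale q0[symmetric] intro: V.span_base)
    then have "subalg_gen scale mult {x} \<subseteq> S" unfolding subalg_gen_def by blast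
    then show ?thesis using gen by auto
  qed
  define Bm where "Bm m = q ` {..<m}" for m
  have BmS: "Bm (Suc m) = insert (q m) (Bm m)" for m by (simp add: Bm_def lessThan_Suc)
  have ind_step: "V.independent (Bm j) \<and> card (Bm j) = j"
    if "\<And>i. i < j \<Longrightarrow> q i \<notin> V.span (Bm i)" for j
    using that
  proof (induction j)
    case 0 then show ?case by (simp add: Bm_def V.independent_empty)
  next
    case (Suc j)
    have IH: "V.independent (Bm j) \<and> card (Bm j) = j" using Suc by simp
    have nq: "q j \<notin> V.span (Bm j)" using Suc.prems by simp
    then have "q j \<notin> Bm j" using V.span_base by blast
    moreover have "finite (Bm j)" by (simp add: Bm_def)
    ultimately show ?case using IH nq by (simp add: BmS V.independent_insertI)
  qed
  have exm: "\<exists>m. q m \<in> V.span (Bm m)"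
  proof (rule ccontr)
    assume "\<not> ?thesis"
    then have all: "V.independent (Bm j) \<and> card (Bm j) = j" for j using ind_step by blast
    obtain B where B: "V.independent B" "UNIV \<subseteq> V.span B" "card B = V.dim UNIV"
      using V.basis_exists[of UNIV] by blast
    have cB: "card B = n" using B D by simp
    have fB: "finite B"
    proof (rule ccontr)
      assume "infinite B" then have "card B = 0" by simp
      then show False using cB n2 by simp
    qed
    have "finite (Bm (Suc n)) \<and> card (Bm (Suc n)) \<le> card B"
      using V.independent_span_bound[OF fB all[THEN conjunct1, of "Suc n"]] B(2) by blast
    then show False using all[of "Suc n"] cB by simp
  qed
  define m0 where "m0 = (LEAST m. q m \<in> V.span (Bm m))"
  have qm0: "q m0 \<in> V.span (Bm m0)" unfolding m0_def by (rule LeastI_ex[OF exm])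
  have minm: "\<And>i. i < m0 \<Longrightarrow> q i \<notin> V.span (Bm i)" unfolding m0_def using not_less_Least by blast
  have indB0: "V.independent (Bm m0)" and cardB0: "card (Bm m0) = m0" using ind_step[OF minm] by blast+
  have clos: "mult x y \<in> V.span (Bm m0)" if "y \<in> V.span (Bm m0)" for y
    using that
  proof (induction rule: V.span_induct_alt)
    case base then show ?case by (simp add: m0r V.span_zero)
  next
    case (step c w y)
    then obtain i where i: "w = q i" "i < m0" by (auto simp: Bm_def)
    have "q (Suc i) \<in> V.span (Bm m0)"
    proof (cases "Suc i = m0")
      case True then show ?thesis using qm0 by simp
    next
      case False then have "Suc i < m0" using i by simp
      then show ?thesis by (intro V.span_base) (auto simp: Bm_def)
    qed
    moreover have "mult x (scale c w + y) = scale c (q (Suc i)) + mult x y" using i by (simp add: madd2 msc2 qS)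
    ultimately show ?case using step by (simp add: V.span_add V.span_scale)
  qed
  have allq: "q i \<in> V.span (Bm m0)" for i
  proof (induction i)
    case 0 show ?case
    proof (cases "m0 = 0")
      case True then show ?thesis using qm0 by simp
    next
      case False then show ?thesis by (intro V.span_base) (auto simp: Bm_def)
    qed
  next
    case (Suc i) then show ?case using clos by (simp add: qS)
  qed
  have spanU: "V.span (Bm m0) = UNIV"
  proof -
    have "V.span (range q) \<subseteq> V.span (V.span (Bm m0))" by (rule V.span_mono) (use allq in auto)
    then show ?thesis using SU unfolding S_def V.span_span by auto
  qed
  have "V.dim UNIV = card (Bm m0)" by (rule V.dim_eq_card) (simp_all add: spanU indB0)
  then have m0n: "m0 = n" using D cardB0 by simp
  define B where "B = Bm n"
  have indB: "V.independent B" using indB0 m0n B_def by simp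
  have spB: "y \<in> V.span B" for y using spanU m0n B_def by simp
  have finB: "finite B" by (simp add: B_def Bm_def)
  have qinj: "inj_on q {..<n}"
    using cardB0 m0n by (simp add: inj_on_iff_eq_card Bm_def)
  have qB: "i < n \<Longrightarrow> q i \<in> B" for i by (simp add: B_def Bm_def)
  define f where "f y = (\<lambda>k. if 1 \<le> k \<and> k \<le> n then V.representation B y (q (k - 1)) else 0)" for y
  have fadd: "f (y + z) = (\<lambda>k. f y k + f z k)" for y z
    unfolding f_def using V.representation_add[OF indB spB spB] by (auto intro!: ext)
  have fsc: "f (scale a y) = (\<lambda>k. a * f y k)" for a y
    unfolding f_def using V.representation_scale[OF indB spB] by (auto intro!: ext)
  have f0: "f 0 = (\<lambda>k. 0)" unfolding f_def V.representation_zero by simp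
  have fsum: "f (\<Sum>i\<in>I. scale (a i) (w i)) = (\<lambda>k. \<Sum>i\<in>I. a i * f (w i) k)" for I :: "nat set" and a w
    by (induction I rule: infinite_finite_induct) (auto simp: f0 fadd fsc)
  have fq: "f (q i) = ev (Suc i)" if i: "i < n" for i
  proof
    fix k
    show "f (q i) k = ev (Suc i) k"
    proof (cases "1 \<le> k \<and> k \<le> n")
      case True
      then have "q (k - 1) = q i \<longleftrightarrow> k - 1 = i" using qinj i by (auto dest: inj_onD)
      then show ?thesis using True unfolding f_def V.representation_basis[OF indB qB[OF i]] ev_def by auto
    next
      case False then show ?thesis unfolding f_def ev_def using i by auto
    qed
  qed
  have expand: "y = (\<Sum>i<n. scale (f y (Suc i)) (q i))" for y
  proof -
    have "y = (\<Sum>b\<in>B. scale (V.representation B y b) b)"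
      using V.sum_representation_eq[OF indB spB finB] by simp
    also have "\<dots> = (\<Sum>i<n. scale (V.representation B y (q i)) (q i))"
      unfolding B_def Bm_def by (rule sum.reindex[OF qinj, unfolded comp_def])
    also have "\<dots> = (\<Sum>i<n. scale (f y (Suc i)) (q i))" by (simp add: f_def)
    finally show ?thesis .
  qed
  have finj: "inj f"
  proof (rule injI)
    fix y z assume "f y = f z"
    then show "y = z" using expand[of y] expand[of z] by simp
  qed
  have frange: "f ` UNIV = cvec n"
  proof
    show "f ` UNIV \<subseteq> cvec n" by (auto simp: f_def cvec_def)
    show "cvec n \<subseteq> f ` UNIV"
    proof
      fix v assume v: "v \<in> cvec n"
      have "f (\<Sum>i<n. scale (v (Suc i)) (q i)) = (\<lambda>k. \<Sum>i<n. v (Suc i) * f (q i) k)" by (rule fsum)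
      also have "\<dots> = (\<lambda>k. \<Sum>i<n. v (Suc i) * ev (Suc i) k)" by (intro ext sum.cong) (auto simp: fq)
      also have "\<dots> = v" using cvec_expand[OF v] by simp
      finally show "v \<in> f ` UNIV" by (metis rangeI)
    qed
  qed
  have fbij: "bij_betw f UNIV (cvec n)" using finj frange by (simp add: bij_betw_def)
  define c where "c = f (q n)"
  obtain m where m: "n = Suc m" using n2 by (cases n) auto
  have fmx: "f (mult x z) = (\<lambda>k. (if 2 \<le> k \<and> k \<le> n then f z (k - 1) else 0) + f z n * c k)" for z
  proof -
    have "mult x z = (\<Sum>i<n. scale (f z (Suc i)) (q (Suc i)))"
      by (subst expand[of z]) (simp add: msum2 msc2 qS)
    then have "f (mult x z) = (\<lambda>k. \<Sum>i<n. f z (Suc i) * f (q (Suc i)) k)" using fsum by simp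
    also have "\<dots> = (\<lambda>k. (\<Sum>i<m. f z (Suc i) * ev (Suc (Suc i)) k) + f z n * c k)"
      by (simp add: m fq c_def)
    also have "\<dots> = (\<lambda>k. (if 2 \<le> k \<and> k \<le> n then f z (k - 1) else 0) + f z n * c k)"
    proof (intro ext)
      fix k
      have "(\<Sum>i<m. f z (Suc i) * ev (Suc (Suc i)) k) = (if 2 \<le> k \<and> k \<le> n then f z (k - 1) else 0)"
      proof (cases k)
        case 0 then show ?thesis by (simp add: ev_def)
      next
        case (Suc k')
        have "(\<Sum>i<m. f z (Suc i) * ev (Suc (Suc i)) k) = (\<Sum>i<m. f z (Suc i) * ev (Suc i) k')"
          using Suc by (simp add: ev_def)
        also have "\<dots> = (if 1 \<le> k' \<and> k' \<le> m then f z (Suc (k' - 1)) else 0)" by (rule sum_ev)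
        finally show ?thesis using Suc m by auto
      qed
      then show "(\<Sum>i<m. f z (Suc i) * ev (Suc (Suc i)) k) + f z n * c k =
          (if 2 \<le> k \<and> k \<le> n then f z (k - 1) else 0) + f z n * c k" by simp
    qed
    finally show ?thesis .
  qed
  have fmult: "f (mult y z) = cyc_mult n c (f y) (f z)" for y z
  proof -
    have "mult y z = (\<Sum>i<n. mult (scale (f y (Suc i)) (q i)) z)"
      by (subst expand[of y]) (simp add: msum1)
    also have "\<dots> = scale (f y 1) (mult x z)"
      unfolding m sum.lessThan_Suc_shift by (simp add: msc1 annih q0)
    finally have "f (mult y z) = f (scale (f y 1) (mult x z))" by simp
    then show ?thesis by (simp add: fsc fmx cyc_mult_def)
  qed
  have iso: "iso_to_model scale mult n c f"
    unfolding iso_to_model_def using fbij fadd fsc fmult by blast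
  have cin: "c \<in> cvec n" using frange c_def by blast
  have c1: "c 1 = 0"
  proof -
    have "f (mult (q n) x) = (\<lambda>k. 0)" using annih'[of n x] n2 f0 by simp
    then have "cyc_mult n c c (ev 1) 2 = 0" using fmult[of "q n" x] fq[of 0] n2 q0 c_def by simp
    then show ?thesis using n2 by (simp add: cyc_mult_def ev_def)
  qed
  show ?thesis using iso cin c1 by blast
qed


theorem theorem3p5:
  fixes scale :: "complex \<Rightarrow> 'a::ab_group_add \<Rightarrow> 'a"
    and mult :: "'a \<Rightarrow> 'a \<Rightarrow> 'a"
    and n :: nat
  assumes "n \<ge> 2"
    and "leibniz_algebra scale mult"
    and "vector_space.dim scale (UNIV :: 'a set) = n"
    and "cyclic_alg scale mult"
  shows "((\<exists>f. iso_to_model scale mult n (c_nil n) f) \<or>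
          (\<exists>f. iso_to_model scale mult n (c_id n) f) \<or>
          (\<exists>k \<alpha>. 2 \<le> k \<and> k \<le> n - 1 \<and> (\<exists>f. iso_to_model scale mult n (c_k n k \<alpha>) f)))
     \<and> \<not> models_iso n (c_nil n) (c_id n)
     \<and> (\<forall>k \<alpha>. 2 \<le> k \<and> k \<le> n - 1 \<longrightarrow>
          \<not> models_iso n (c_nil n) (c_k n k \<alpha>) \<and> \<not> models_iso n (c_id n) (c_k n k \<alpha>))
     \<and> (\<forall>k \<alpha> k' \<alpha>'. 2 \<le> k \<and> k \<le> n - 1 \<and> 2 \<le> k' \<and> k' \<le> n - 1 \<longrightarrow>
          (models_iso n (c_k n k \<alpha>) (c_k n k' \<alpha>') \<longleftrightarrow>
             k = k' \<and> tuple_sim (n - k) (\<lambda>i. \<alpha> (k + i)) (\<lambda>i. \<alpha>' (k + i))))"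
proof -
  note n2 = assms(1)
  obtain c f where cin: "c \<in> cvec n" and c1: "c 1 = 0" and iso: "iso_to_model scale mult n c f"
    using existence[OF assms] by blast
  have part1: "(\<exists>f. iso_to_model scale mult n (c_nil n) f) \<or>
          (\<exists>f. iso_to_model scale mult n (c_id n) f) \<or>
          (\<exists>k \<alpha>. 2 \<le> k \<and> k \<le> n - 1 \<and> (\<exists>f. iso_to_model scale mult n (c_k n k \<alpha>) f))"
    using normalize[OF n2 cin c1]
  proof (elim disjE exE conjE)
    assume "c = c_nil n" then show ?thesis using iso by blast
  next
    fix t assume "t \<noteq> 0" "\<forall>k. t ^ k * c k = t ^ (n + 1) * c_id n k"
    then show ?thesis using iso_scale[OF iso] by blast
  next
    fix k \<alpha> t assume "2 \<le> k" "k \<le> n - 1" "t \<noteq> 0" "\<forall>j. t ^ j * c j = t ^ (n + 1) * c_k n k \<alpha> j"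
    then show ?thesis using iso_scale[OF iso] by blast
  qed
  show ?thesis
    using part1 uniq_nil_id[OF n2] uniq_nil_k[OF n2] uniq_id_k[OF n2] uniq_k_k[OF n2] by blast
qed

end
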